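(* Let $\mathbf{D}=[\mathbf{B}\ \mathbf{A}]\mathbf{T}\in\mathbb{R}^{M_1\times M_2}$ follow Data Model 1 (context), with unit $\ell_2$-norm columns. Let $\mathbf{d}$ be one of the columns of $\mathbf{B}$, let $\hat{\mathbf{c}}$ be the optimal point of $$\min_{\mathbf{c}}\|\mathbf{c}^T\mathbf{D}\|_1\ \text{ s.t. }\ \mathbf{c}^T\mathbf{d}=1,\ \mathbf{c}\in\mathcal{U}^\perp,$$ let $\mathcal{I}_0=\{i\in[M_2]:\hat{\mathbf{c}}^T\mathbf{d}_i=0,\ \mathbf{d}_i\text{ a column of }\mathbf{B}\}$, $\mathbf{d}^\perp=(\mathbf{I}-\mathbf{U}\mathbf{U}^T)\mathbf{d}/\|(\mathbf{I}-\mathbf{U}\mathbf{U}^T)\mathbf{d}\|_2$, and $\mathbf{o}=\sum_{\mathbf{d}_i\in\mathbf{B}}\mathrm{sgn}(\hat{\mathbf{c}}^T\mathbf{d}_i)\,\mathbf{d}_i$. If $$\frac12\inf_{\boldsymbol\delta\in\mathcal{U},\|\boldsymbol\delta\|_2=1}\sum_{\mathbf{d}_i\in\mathbf{A}}|\boldsymbol\delta^T\mathbf{d}_i|>\sup_{\boldsymbol\delta\in\mathcal{U},\|\boldsymbol\delta\|=1}\sum_{\mathbf{d}_i\in\mathbf{B},\,i\in\mathcal{I}_0}|\boldsymbol\delta^T\mathbf{d}_i|+\|\mathbf{U}^T\mathbf{o}\|_2$$ and $$\inf_{\boldsymbol\delta\in\mathcal{U},\|\boldsymbol\delta\|_2=1}\sum_{\mathbf{d}_i\in\mathbf{A}}|\boldsymbol\delta^T\mathbf{d}_i|>\frac{2\|\mathbf{d}^T\mathbf{U}\|_2}{\sqrt{1-\|\mathbf{d}^T\mathbf{U}\|_2^2}}\Big(\mathbf{o}^T\mathbf{d}^\perp+\sum_{\mathbf{d}_i\in\mathbf{B},\,i\in\mathcal{I}_0}|\mathbf{d}_i^T\mathbf{d}^\perp|\Big),$$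 then $$\arg\min_{\mathbf{c}\in\mathcal{U}^\perp,\ \mathbf{d}^T\mathbf{c}=1}\|\mathbf{c}^T\mathbf{D}\|_1=\arg\min_{\mathbf{d}^T\mathbf{c}=1}\|\mathbf{c}^T\mathbf{D}\|_1 .$$
   Context: Data Model 1: $\mathbf{D}=[\mathbf{B}\ \mathbf{A}]\mathbf{T}$, where $\mathbf{T}$ is a permutation matrix, $\mathbf{A}\in\mathbb{R}^{M_1\times n_i}$ has columns (inliers) lying in an $r$-dimensional subspace $\mathcal{U}$ with orthonormal basis $\mathbf{U}\in\mathbb{R}^{M_1\times r}$, and $\mathbf{B}\in\mathbb{R}^{M_1\times n_o}$ has columns (outliers) not lying in $\mathcal{U}$. The columns of $\mathbf{D}$ are $\mathbf{d}_1,\dots,\mathbf{d}_{M_2}$; "$\mathbf{d}_i\in\mathbf{A}$" ("$\in\mathbf{B}$") means $\mathbf{d}_i$ is a column of $\mathbf{A}$ (of $\mathbf{B}$). $\mathcal{U}^\perp$ is the orthogonal complement of $\mathcal{U}$. *)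

theory Defs
  imports "HOL-Analysis.Analysis"
begin

definition l1obj :: "real^'n^'m \<Rightarrow> real^'m \<Rightarrow> real" where
  "l1obj D c = (\<Sum>i\<in>UNIV. \<bar>c \<bullet> column i D\<bar>)"

definition colspace :: "real^'r^'m \<Rightarrow> (real^'m) set" where
  "colspace U = range (\<lambda>x. U *v x)"

definition perpspace :: "real^'r^'m \<Rightarrow> (real^'m) set" where
  "perpspace U = {c. \<forall>u\<in>colspace U. c \<bullet> u = 0}"

definition argmin_set :: "('a \<Rightarrow> bool) \<Rightarrow> ('a \<Rightarrow> real) \<Rightarrow> 'a set" where
  "argmin_set P f = {c. P c \<and> (\<forall>c'. P c' \<longrightarrow> f c \<le> f c')}"

end

theory Submission
  imports Defs
begin


lemma dotU: "(U *v y) \<bullet> v = y \<bullet> (transpose U *v (v::real^'m))"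
  for U :: "real^'r^'m"
  by (metis dot_lmul_matrix inner_commute transpose_matrix_vector)

lemma UtU: fixes U :: "real^'r^'m" assumes "transpose U ** U = mat 1"
  shows "transpose U *v (U *v y) = (y::real^'r)"
  by (simp only: matrix_vector_mul_assoc assms matrix_vector_mul_lid)

lemma normU: fixes U :: "real^'r^'m" assumes "transpose U ** U = mat 1"
  shows "norm (U *v y) = norm (y::real^'r)"
proof -
  have "(U *v y) \<bullet> (U *v y) = y \<bullet> y" by (simp only: dotU UtU[OF assms])
  then show ?thesis by (simp add: norm_eq_sqrt_inner)
qed

lemma perp_iff: "c \<in> perpspace U \<longleftrightarrow> transpose U *v c = 0" for U :: "real^'r^'m"
proof
  assume "c \<in> perpspace U"
  then have "(U *v (transpose U *v c)) \<bullet> c = 0"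
    by (auto simp: perpspace_def colspace_def inner_commute)
  then have "(transpose U *v c) \<bullet> (transpose U *v c) = 0" by (simp only: dotU)
  then show "transpose U *v c = 0" by (simp only: inner_eq_zero_iff)
next
  assume "transpose U *v c = 0"
  then show "c \<in> perpspace U"
    unfolding perpspace_def colspace_def
  proof (intro CollectI ballI)
    fix u assume "u \<in> range (\<lambda>x. U *v x)"
    then obtain y where "u = U *v y" by auto
    then have "c \<bullet> u = y \<bullet> (transpose U *v c)" by (simp only: inner_commute[of c] dotU)
    then show "c \<bullet> u = 0" using \<open>transpose U *v c = 0\<close> by simp
  qed
qed

lemma col_perp: "u \<in> colspace U \<Longrightarrow> c \<in> perpspace U \<Longrightarrow> c \<bullet> u = 0"
  by (simp add: perpspace_def)

lemma sgnx: "sgn (x::real) * x = \<bar>x\<bar>" by (simp add: sgn_if)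

lemma sgn_le: "sgn (x::real) * y \<le> \<bar>y\<bar>" by (auto simp: sgn_if)



theorem lemma9:
  fixes D :: "real^'n^'m" and U :: "real^'r^'m"
    and Inl :: "'n set" and j :: 'n and chat :: "real^'m"
  assumes orth: "transpose U ** U = mat 1"
    and inliers: "\<forall>i\<in>Inl. column i D \<in> colspace U"
    and outliers: "\<forall>i. i \<notin> Inl \<longrightarrow> column i D \<notin> colspace U"
    and unit: "\<forall>i. norm (column i D) = 1"
    and jout: "j \<notin> Inl"
    and copt: "chat \<in> argmin_set (\<lambda>c. c \<bullet> column j D = 1 \<and> c \<in> perpspace U) (l1obj D)"
    and cond1: "let I0 = {i. i \<notin> Inl \<and> chat \<bullet> column i D = 0};
                    ov = (\<Sum>i\<in>-Inl. sgn (chat \<bullet> column i D) *\<^sub>R column i D)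
                in (1/2) * Inf ((\<lambda>\<delta>. \<Sum>i\<in>Inl. \<bar>\<delta> \<bullet> column i D\<bar>) ` {\<delta>\<in>colspace U. norm \<delta> = 1})
                   > Sup ((\<lambda>\<delta>. \<Sum>i\<in>I0. \<bar>\<delta> \<bullet> column i D\<bar>) ` {\<delta>\<in>colspace U. norm \<delta> = 1})
                     + norm (transpose U *v ov)"
    and cond2: "let d = column j D;
                    I0 = {i. i \<notin> Inl \<and> chat \<bullet> column i D = 0};
                    ov = (\<Sum>i\<in>-Inl. sgn (chat \<bullet> column i D) *\<^sub>R column i D);
                    r = d - U *v (transpose U *v d);
                    dperp = (1 / norm r) *\<^sub>R r;
                    a = norm (transpose U *v d)
                in Inf ((\<lambda>\<delta>. \<Sum>i\<in>Inl. \<bar>\<delta> \<bullet> column i D\<bar>) ` {\<delta>\<in>colspace U. norm \<delta> = 1})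
                   > (2 * a / sqrt (1 - a^2)) * (ov \<bullet> dperp + (\<Sum>i\<in>I0. \<bar>column i D \<bullet> dperp\<bar>))"
  shows "argmin_set (\<lambda>c. c \<in> perpspace U \<and> column j D \<bullet> c = 1) (l1obj D)
       = argmin_set (\<lambda>c. column j D \<bullet> c = 1) (l1obj D)"
proof -
  define d where "d = column j D"
  define I0 where "I0 = {i. i \<notin> Inl \<and> chat \<bullet> column i D = 0}"
  define ov where "ov = (\<Sum>i\<in>-Inl. sgn (chat \<bullet> column i D) *\<^sub>R column i D)"
  define r where "r = d - U *v (transpose U *v d)"
  define dperp where "dperp = (1 / norm r) *\<^sub>R r"
  define a where "a = norm (transpose U *v d)"
  define UU where "UU = {\<delta>\<in>colspace U. norm \<delta> = 1}"
  define InfA where "InfA = Inf ((\<lambda>\<delta>. \<Sum>i\<in>Inl. \<bar>\<delta> \<bullet> column i D\<bar>) ` UU)"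
  define SupI where "SupI = Sup ((\<lambda>\<delta>. \<Sum>i\<in>I0. \<bar>\<delta> \<bullet> column i D\<bar>) ` UU)"
  define N where "N = norm (transpose U *v ov)"
  define Q where "Q = ov \<bullet> dperp + (\<Sum>i\<in>I0. \<bar>column i D \<bullet> dperp\<bar>)"
  define F where "F = l1obj D chat"
  define L where "L x = ov \<bullet> x + (\<Sum>i\<in>I0. \<bar>x \<bullet> column i D\<bar>)" for x
  define s where "s i = sgn (chat \<bullet> column i D)" for i
  have c1: "(1/2) * InfA > SupI + N"
    using cond1 unfolding Let_def InfA_def SupI_def N_def UU_def I0_def ov_def by simp
  have c2: "InfA > (2 * a / sqrt (1 - a^2)) * Q"
    using cond2 unfolding Let_def InfA_def Q_def UU_def I0_def ov_def a_def dperp_def r_def d_def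
    by simp
  have chat_feas: "chat \<bullet> d = 1" "chat \<in> perpspace U"
    using copt by (auto simp: argmin_set_def d_def)
  have chat_opt: "\<And>c'. c' \<bullet> d = 1 \<Longrightarrow> c' \<in> perpspace U \<Longrightarrow> F \<le> l1obj D c'"
    using copt by (auto simp: argmin_set_def d_def F_def)
  have inl0: "\<And>i x. i \<in> Inl \<Longrightarrow> x \<in> perpspace U \<Longrightarrow> x \<bullet> column i D = 0"
    using inliers col_perp by blast
  have finI: "finite A" for A :: "'n set" by simp
  have Lsum: "(\<Sum>i\<in>-Inl. s i * (x \<bullet> column i D) + (if chat \<bullet> column i D = 0 then \<bar>x \<bullet> column i D\<bar> else 0)) = L x" for x
  proof -
    have "(\<Sum>i\<in>-Inl. s i * (x \<bullet> column i D)) = ov \<bullet> x"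
      unfolding ov_def s_def inner_sum_left inner_scaleR_left by (simp add: inner_commute)
    moreover have "(\<Sum>i\<in>-Inl. (if chat \<bullet> column i D = 0 then \<bar>x \<bullet> column i D\<bar> else 0))
        = (\<Sum>i\<in>I0. \<bar>x \<bullet> column i D\<bar>)"
      by (simp add: sum.inter_restrict I0_def Collect_conj_eq Compl_eq)
    ultimately show ?thesis by (simp add: L_def sum.distrib)
  qed
  have Fsum: "F = (\<Sum>i\<in>-Inl. \<bar>chat \<bullet> column i D\<bar>)"
  proof -
    have "F = (\<Sum>i\<in>Inl. \<bar>chat \<bullet> column i D\<bar>) + (\<Sum>i\<in>-Inl. \<bar>chat \<bullet> column i D\<bar>)"
      unfolding F_def l1obj_def by (metis Compl_partition Diff_Compl disjoint_eq_subset_Compl double_complement finite sum.union_disjoint order_refl)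
    also have "(\<Sum>i\<in>Inl. \<bar>chat \<bullet> column i D\<bar>) = 0" using inl0 chat_feas by simp
    finally show ?thesis by simp
  qed
  have LF: "L chat = F"
  proof -
    have "L chat = (\<Sum>i\<in>-Inl. s i * (chat \<bullet> column i D) + (if chat \<bullet> column i D = 0 then \<bar>chat \<bullet> column i D\<bar> else 0))"
      by (simp only: Lsum)
    also have "\<dots> = (\<Sum>i\<in>-Inl. \<bar>chat \<bullet> column i D\<bar>)"
      by (rule sum.cong) (auto simp: s_def sgnx)
    finally show ?thesis using Fsum by simp
  qed
  have K: "L w \<ge> 0" if wp: "w \<in> perpspace U" and wd: "w \<bullet> d = 0" for w
  proof -
    define g where "g i = s i * (w \<bullet> column i D) + (if chat \<bullet> column i D = 0 then \<bar>w \<bullet> column i D\<bar> else 0)" for i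
    have ev: "eventually (\<lambda>t. \<bar>(chat + t *\<^sub>R w) \<bullet> column i D\<bar> = \<bar>chat \<bullet> column i D\<bar> + t * g i) (at_right (0::real))" for i
    proof (cases "chat \<bullet> column i D = 0")
      case True
      have "eventually (\<lambda>t. t > (0::real)) (at_right 0)" by (simp add: eventually_at_right_less)
      then show ?thesis
        by eventually_elim (auto simp: g_def True s_def inner_add_left abs_mult)
    next
      case False
      define x where "x = chat \<bullet> column i D"
      define y where "y = w \<bullet> column i D"
      have xnz: "x \<noteq> 0" using False x_def by simp
      have "eventually (\<lambda>t. \<bar>x + t * y\<bar> = \<bar>x\<bar> + t * (sgn x * y)) (at_right (0::real))"
        unfolding eventually_at_right_field
      proof (intro exI[of _ "\<bar>x\<bar> / (\<bar>y\<bar> + 1)"] conjI allI impI)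
        show "0 < \<bar>x\<bar> / (\<bar>y\<bar> + 1)" using xnz by simp
      next
        fix t :: real assume t0: "0 < t" and tb: "t < \<bar>x\<bar> / (\<bar>y\<bar> + 1)"
        have "t * (\<bar>y\<bar> + 1) < \<bar>x\<bar>" using tb by (simp add: field_simps)
        then have ty: "t * \<bar>y\<bar> < \<bar>x\<bar>" using t0 by (simp add: algebra_simps)
        have "\<bar>t * y\<bar> = t * \<bar>y\<bar>" using t0 by (simp add: abs_mult)
        then have "\<bar>t * y\<bar> < \<bar>x\<bar>" using ty by simp
        then show "\<bar>x + t * y\<bar> = \<bar>x\<bar> + t * (sgn x * y)"
          using xnz by (cases "x > 0") (auto simp: sgn_if abs_if algebra_simps)
      qed
      then show ?thesis
        by eventually_elim (simp add: g_def False s_def inner_add_left x_def y_def)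
    qed
    have "eventually (\<lambda>t. \<forall>i. \<bar>(chat + t *\<^sub>R w) \<bullet> column i D\<bar> = \<bar>chat \<bullet> column i D\<bar> + t * g i) (at_right (0::real))"
      by (rule eventually_all_finite) (rule ev)
    moreover have "eventually (\<lambda>t. t > (0::real)) (at_right 0)" by (simp add: eventually_at_right_less)
    ultimately have "eventually (\<lambda>t. t > 0 \<and> (\<forall>i. \<bar>(chat + t *\<^sub>R w) \<bullet> column i D\<bar> = \<bar>chat \<bullet> column i D\<bar> + t * g i)) (at_right (0::real))"
      by eventually_elim auto
    then obtain b :: real where b0: "b > 0" and bP: "\<forall>t>0. t < b \<longrightarrow> t > 0 \<and> (\<forall>i. \<bar>(chat + t *\<^sub>R w) \<bullet> column i D\<bar> = \<bar>chat \<bullet> column i D\<bar> + t * g i)"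
      unfolding eventually_at_right_field by blast
    define t where "t = b / 2"
    have t0: "t > 0" and teq: "\<And>i. \<bar>(chat + t *\<^sub>R w) \<bullet> column i D\<bar> = \<bar>chat \<bullet> column i D\<bar> + t * g i"
      using bP b0 unfolding t_def by auto
    have feas1: "(chat + t *\<^sub>R w) \<bullet> d = 1" using chat_feas wd by (simp add: inner_add_left)
    have feas2: "chat + t *\<^sub>R w \<in> perpspace U"
      using chat_feas(2) wp by (simp add: perpspace_def inner_add_left)
    have "F \<le> l1obj D (chat + t *\<^sub>R w)" by (rule chat_opt[OF feas1 feas2])
    also have "\<dots> = (\<Sum>i\<in>UNIV. \<bar>chat \<bullet> column i D\<bar> + t * g i)" unfolding l1obj_def using teq by simp
    also have "\<dots> = F + t * (\<Sum>i\<in>UNIV. g i)" by (simp add: F_def l1obj_def sum.distrib sum_distrib_left)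
    finally have "(\<Sum>i\<in>UNIV. g i) \<ge> 0" using t0 by (simp add: zero_le_mult_iff)
    moreover have "(\<Sum>i\<in>UNIV. g i) = (\<Sum>i\<in>-Inl. g i)"
    proof -
      have "(\<Sum>i\<in>UNIV. g i) = (\<Sum>i\<in>Inl. g i) + (\<Sum>i\<in>-Inl. g i)"
        by (metis Compl_partition Diff_Compl disjoint_eq_subset_Compl double_complement finite sum.union_disjoint order_refl)
      moreover have "g i = 0" if "i \<in> Inl" for i
        using inl0[OF that wp] inl0[OF that chat_feas(2)] by (simp add: g_def s_def)
      ultimately show ?thesis by simp
    qed
    moreover have "(\<Sum>i\<in>-Inl. g i) = L w" unfolding g_def by (rule Lsum)
    ultimately show ?thesis by simp
  qed
  have LB: "L x \<ge> (d \<bullet> x) * F" if xp: "x \<in> perpspace U" for x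
  proof -
    define w where "w = x - (d \<bullet> x) *\<^sub>R chat"
    have wp: "w \<in> perpspace U" using xp chat_feas(2) by (simp add: w_def perpspace_def inner_diff_left)
    have wd: "w \<bullet> d = 0" using chat_feas(1) by (simp add: w_def inner_diff_left inner_commute[of d])
    have xw: "x = w + (d \<bullet> x) *\<^sub>R chat" by (simp add: w_def)
    have "L x = ov \<bullet> w + (d \<bullet> x) * (ov \<bullet> chat) + (\<Sum>i\<in>I0. \<bar>w \<bullet> column i D\<bar>)"
    proof -
      have "\<And>i. i \<in> I0 \<Longrightarrow> x \<bullet> column i D = w \<bullet> column i D"
        by (subst xw) (simp add: I0_def inner_add_left)
      then have "(\<Sum>i\<in>I0. \<bar>x \<bullet> column i D\<bar>) = (\<Sum>i\<in>I0. \<bar>w \<bullet> column i D\<bar>)" by simp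
      moreover have "ov \<bullet> x = ov \<bullet> w + (d \<bullet> x) * (ov \<bullet> chat)"
        by (subst xw) (simp add: inner_add_right)
      ultimately show ?thesis by (simp add: L_def)
    qed
    moreover have "ov \<bullet> chat = F"
    proof -
      have "(\<Sum>i\<in>I0. \<bar>chat \<bullet> column i D\<bar>) = 0" by (simp add: I0_def)
      then show ?thesis using LF by (simp add: L_def)
    qed
    moreover have "L w = ov \<bullet> w + (\<Sum>i\<in>I0. \<bar>w \<bullet> column i D\<bar>)" by (simp add: L_def)
    ultimately have "L x = L w + (d \<bullet> x) * F" by simp
    then show ?thesis using K[OF wp wd] by simp
  qed
  define p where "p = transpose U *v d"
  have dn: "d \<bullet> d = 1" using unit by (simp add: d_def norm_eq_sqrt_inner)
  have rU: "transpose U *v r = 0"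
    by (simp only: r_def matrix_vector_mult_diff_distrib UtU[OF orth]) simp
  have rp: "r \<in> perpspace U" using rU perp_iff by blast
  have dUp: "d = r + U *v p" by (simp add: r_def p_def)
  have Upr: "(U *v p) \<bullet> r = 0" by (simp only: dotU rU) simp
  have Upd: "(U *v p) \<bullet> d = p \<bullet> p" by (simp only: dotU p_def)
  have Upn: "(U *v p) \<bullet> (U *v p) = p \<bullet> p" by (simp only: dotU UtU[OF orth])
  have dr: "d \<bullet> r = r \<bullet> r" using Upr by (subst dUp) (simp add: inner_add_left)
  have rr: "r \<bullet> r = 1 - a^2"
  proof -
    have "d \<bullet> d = r \<bullet> r + p \<bullet> p" using Upr Upn
      by (subst (1 2) dUp) (simp add: inner_add_left inner_add_right inner_commute)
    then show ?thesis using dn by (simp add: a_def p_def power2_norm_eq_inner)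
  qed
  have rnz: "r \<noteq> 0"
  proof
    assume "r = 0"
    then have "d \<in> colspace U" using dUp by (simp add: colspace_def)
    then show False using outliers jout by (simp add: d_def)
  qed
  have nr: "norm r = sqrt (1 - a^2)" using rr by (simp add: norm_eq_sqrt_inner)
  have nrpos: "norm r > 0" using rnz by simp
  have dperp_p: "dperp \<in> perpspace U" using rp by (simp add: dperp_def perpspace_def)
  have ddperp: "d \<bullet> dperp = norm r"
    using dr nrpos by (simp add: dperp_def power2_norm_eq_inner[symmetric] power2_eq_square)
  have Qge: "norm r * F \<le> Q"
  proof -
    have "L dperp = Q" by (simp add: L_def Q_def inner_commute)
    then show ?thesis using LB[OF dperp_p] ddperp by simp
  qed
  have a0: "a \<ge> 0" by (simp add: a_def)
  have F0: "F \<ge> 0" by (simp add: F_def l1obj_def sum_nonneg)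
  have MAIN: "F < l1obj D c" if cd: "d \<bullet> c = 1" and cnp: "c \<notin> perpspace U" for c
  proof -
    define q where "q = transpose U *v c"
    define \<delta> where "\<delta> = U *v q"
    define c1 where "c1 = c - \<delta>"
    define n where "n = norm \<delta>"
    have c1p: "c1 \<in> perpspace U"
      unfolding perp_iff by (simp only: c1_def \<delta>_def q_def matrix_vector_mult_diff_distrib UtU[OF orth]) simp
    have nq: "n = norm q" by (simp add: n_def \<delta>_def normU[OF orth])
    have npos: "n > 0"
    proof (rule ccontr)
      assume "\<not> n > 0"
      then have "q = 0" using nq by simp
      then have "c \<in> perpspace U" unfolding perp_iff q_def .
      then show False using cnp by simp
    qed
    have \<delta>col: "\<delta> \<in> colspace U" by (simp add: \<delta>_def colspace_def)
    define e where "e = d \<bullet> \<delta>"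
    have e_le: "\<bar>e\<bar> \<le> n * a"
    proof -
      have "e = q \<bullet> p" by (simp add: e_def \<delta>_def inner_commute[of d] dotU p_def)
      then show ?thesis using Cauchy_Schwarz_ineq2[of q p] by (simp add: nq a_def p_def)
    qed
    have ov_ge: "ov \<bullet> \<delta> \<ge> - (n * N)"
    proof -
      have "ov \<bullet> \<delta> = q \<bullet> (transpose U *v ov)" by (simp add: \<delta>_def inner_commute[of ov] dotU)
      then show ?thesis using Cauchy_Schwarz_ineq2[of q "transpose U *v ov"] by (simp add: nq N_def)
    qed
    define u where "u = (1 / n) *\<^sub>R \<delta>"
    have uUU: "u \<in> UU"
    proof -
      have "u \<in> colspace U" using \<delta>col by (auto simp: u_def colspace_def intro!: image_eqI[of _ _ "(1/n) *\<^sub>R q"] simp add: matrix_vector_mult_scaleR \<delta>_def)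
      moreover have "norm u = 1" using npos by (simp add: u_def n_def)
      ultimately show ?thesis by (simp add: UU_def)
    qed
    have \<delta>u: "\<delta> = n *\<^sub>R u" using npos by (simp add: u_def)
    have SA: "(\<Sum>i\<in>Inl. \<bar>\<delta> \<bullet> column i D\<bar>) \<ge> n * InfA"
    proof -
      have "InfA \<le> (\<Sum>i\<in>Inl. \<bar>u \<bullet> column i D\<bar>)"
        unfolding InfA_def
        by (rule cInf_lower) (auto intro: uUU bdd_belowI[of _ 0] simp: sum_nonneg)
      moreover have "(\<Sum>i\<in>Inl. \<bar>\<delta> \<bullet> column i D\<bar>) = n * (\<Sum>i\<in>Inl. \<bar>u \<bullet> column i D\<bar>)"
        using npos by (simp add: \<delta>u abs_mult sum_distrib_left)
      ultimately show ?thesis using npos by simp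
    qed
    have SI: "(\<Sum>i\<in>I0. \<bar>\<delta> \<bullet> column i D\<bar>) \<le> n * SupI"
    proof -
      have bnd: "(\<Sum>i\<in>I0. \<bar>v \<bullet> column i D\<bar>) \<le> real (card I0)" if "v \<in> UU" for v
      proof -
        have "(\<Sum>i\<in>I0. \<bar>v \<bullet> column i D\<bar>) \<le> (\<Sum>i\<in>I0. 1)"
        proof (rule sum_mono)
          fix i
          have "norm v = 1" using that by (simp add: UU_def)
          then show "\<bar>v \<bullet> column i D\<bar> \<le> 1" using Cauchy_Schwarz_ineq2[of v "column i D"] unit by simp
        qed
        then show ?thesis by simp
      qed
      have "(\<Sum>i\<in>I0. \<bar>u \<bullet> column i D\<bar>) \<le> SupI"
        unfolding SupI_def
        by (rule cSup_upper) (auto intro: uUU bdd_aboveI[of _ "real (card I0)"] bnd)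
      moreover have "(\<Sum>i\<in>I0. \<bar>\<delta> \<bullet> column i D\<bar>) = n * (\<Sum>i\<in>I0. \<bar>u \<bullet> column i D\<bar>)"
        using npos by (simp add: \<delta>u abs_mult sum_distrib_left)
      ultimately show ?thesis using npos by simp
    qed
    have split: "l1obj D c = (\<Sum>i\<in>Inl. \<bar>c \<bullet> column i D\<bar>) + (\<Sum>i\<in>-Inl. \<bar>c \<bullet> column i D\<bar>)"
      unfolding l1obj_def by (metis Compl_partition Diff_Compl disjoint_eq_subset_Compl double_complement finite sum.union_disjoint order_refl)
    have inlc: "(\<Sum>i\<in>Inl. \<bar>c \<bullet> column i D\<bar>) = (\<Sum>i\<in>Inl. \<bar>\<delta> \<bullet> column i D\<bar>)"
    proof (rule sum.cong)
      fix i assume "i \<in> Inl"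
      then have "c1 \<bullet> column i D = 0" using inl0 c1p by blast
      then show "\<bar>c \<bullet> column i D\<bar> = \<bar>\<delta> \<bullet> column i D\<bar>" by (simp add: c1_def inner_diff_left)
    qed simp
    have outc: "(\<Sum>i\<in>-Inl. \<bar>c \<bullet> column i D\<bar>) \<ge> L c"
      unfolding Lsum[symmetric]
      by (rule sum_mono) (auto simp: s_def sgn_le)
    have Lc: "L c \<ge> L c1 + ov \<bullet> \<delta> - (\<Sum>i\<in>I0. \<bar>\<delta> \<bullet> column i D\<bar>)"
    proof -
      have "(\<Sum>i\<in>I0. \<bar>c1 \<bullet> column i D\<bar>) \<le> (\<Sum>i\<in>I0. \<bar>c \<bullet> column i D\<bar> + \<bar>\<delta> \<bullet> column i D\<bar>)"
        by (rule sum_mono) (simp add: c1_def inner_diff_left abs_triangle_ineq4)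
      moreover have "ov \<bullet> c = ov \<bullet> c1 + ov \<bullet> \<delta>" by (simp add: c1_def inner_diff_right)
      ultimately show ?thesis by (simp add: L_def sum.distrib)
    qed
    have Lc1: "L c1 \<ge> (1 - e) * F"
    proof -
      have "d \<bullet> c1 = 1 - e" using cd by (simp add: c1_def e_def inner_diff_right)
      then show ?thesis using LB[OF c1p] by simp
    qed
    have eF: "e * F \<le> n * (a * F)"
    proof -
      have "e * F \<le> \<bar>e\<bar> * F" using F0 by (simp add: mult_right_mono)
      also have "\<dots> \<le> n * a * F" using e_le F0 by (simp add: mult_right_mono)
      finally show ?thesis by simp
    qed
    have aF: "a * F \<le> a * Q / norm r"
    proof -
      have "F \<le> Q / norm r" using Qge nrpos by (simp add: field_simps)
      then have "a * F \<le> a * (Q / norm r)" by (rule mult_left_mono[OF _ a0])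
      then show ?thesis by simp
    qed
    have aQ: "a * Q / norm r < InfA / 2"
    proof -
      have "(2 * a / norm r) * Q < InfA" using c2 nr by simp
      then show ?thesis by (simp add: field_simps)
    qed
    have pos: "InfA - SupI - N - a * F > 0" using c1 aF aQ by linarith
    have "l1obj D c \<ge> F - e * F + n * InfA - n * N - n * SupI"
      using split inlc outc Lc Lc1 SA SI ov_ge by (simp add: algebra_simps)
    also have "F - e * F + n * InfA - n * N - n * SupI \<ge> F + n * (InfA - SupI - N - a * F)"
      using eF by (simp add: algebra_simps)
    finally have "l1obj D c \<ge> F + n * (InfA - SupI - N - a * F)" .
    moreover have "n * (InfA - SupI - N - a * F) > 0" using npos pos by simp
    ultimately show ?thesis by linarith
  qed
  have chat_d: "d \<bullet> chat = 1" using chat_feas(1) by (simp add: inner_commute)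
  show ?thesis
  proof (rule set_eqI)
    fix x
    show "x \<in> argmin_set (\<lambda>c. c \<in> perpspace U \<and> column j D \<bullet> c = 1) (l1obj D)
      \<longleftrightarrow> x \<in> argmin_set (\<lambda>c. column j D \<bullet> c = 1) (l1obj D)"
    proof
      assume "x \<in> argmin_set (\<lambda>c. c \<in> perpspace U \<and> column j D \<bullet> c = 1) (l1obj D)"
      then have xp: "x \<in> perpspace U" and xd: "d \<bullet> x = 1"
        and xmin: "\<And>c'. c' \<in> perpspace U \<Longrightarrow> d \<bullet> c' = 1 \<Longrightarrow> l1obj D x \<le> l1obj D c'"
        by (auto simp: argmin_set_def d_def)
      have xF: "l1obj D x \<le> F" unfolding F_def by (rule xmin[OF chat_feas(2) chat_d])
      have "l1obj D x \<le> l1obj D c'" if "d \<bullet> c' = 1" for c'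
      proof (cases "c' \<in> perpspace U")
        case True then show ?thesis using xmin that by blast
      next
        case False then show ?thesis using MAIN[OF that False] xF by simp
      qed
      then show "x \<in> argmin_set (\<lambda>c. column j D \<bullet> c = 1) (l1obj D)"
        using xd by (auto simp: argmin_set_def d_def)
    next
      assume "x \<in> argmin_set (\<lambda>c. column j D \<bullet> c = 1) (l1obj D)"
      then have xd: "d \<bullet> x = 1"
        and xmin: "\<And>c'. d \<bullet> c' = 1 \<Longrightarrow> l1obj D x \<le> l1obj D c'"
        by (auto simp: argmin_set_def d_def)
      have xF: "l1obj D x \<le> F" unfolding F_def by (rule xmin[OF chat_d])
      have xp: "x \<in> perpspace U"
      proof (rule ccontr)
        assume "x \<notin> perpspace U"
        then show False using MAIN[OF xd] xF by simp
      qed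
      show "x \<in> argmin_set (\<lambda>c. c \<in> perpspace U \<and> column j D \<bullet> c = 1) (l1obj D)"
        using xd xp xmin by (auto simp: argmin_set_def d_def)
    qed
  qed
qed
end
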